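(* Let $\xi>0$ and consider the reduced problem $\dot y=e^z-1$, $\dot z=\xi+e^z(\xi z-\xi y-\xi)$ (i.e. with $\alpha=\xi$), compactified at infinity. There is a unique heteroclinic connection between the points at infinity $Q^3$ and $Q^6$ on the critical manifold; it runs through the manifolds $W^{c,s}$ and $W^{c,u}$ and coincides with the level set $\{H=1\}$ of $H(y,z)=-e^{-\xi y}(\xi y-\xi z+\xi+1-\xi e^{-z})+1$. This set can be written as the union of two graphs $z=z^\pm(y)$, $y\ge -1/\xi$, such that $z^-(y)$ approaches $Q^3$ with $z^-=O(y)$ and $z^+(y)$ approaches $Q^6$ with $z^+=O(\ln y)$ as $y\to\infty$.
   Context: Points at infinity: with $y_3=y/z$, $w_3=1/z$ ($z>0$), $Q^3=(w_3,y_3)=(0,1)$ (for $\alpha=\xi$); with $\rho=-1/z$, $\eta=e^{-z}/y$ ($z<0$, $y>0$), $Q^6=(\rho,\eta)=(0,1)$. $W^{c,s}$ is the unique center-stable manifold of $Q^3$ and $W^{c,u}$ the unique center-unstable manifold of $Q^6$ for the compactified, time-desingularized reduced problem. *)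

theory Defs
  imports "HOL-Analysis.Analysis" "HOL-Library.Landau_Symbols"
begin

definition H :: "real \<Rightarrow> real \<Rightarrow> real \<Rightarrow> real" where
  "H xi y z = - exp (- xi * y) * (xi * y - xi * z + xi + 1 - xi * exp (- z)) + 1"

definition time_int :: "ereal \<Rightarrow> ereal \<Rightarrow> real set" where
  "time_int a b = {t. a < ereal t \<and> ereal t < b}"

definition upper_end :: "ereal \<Rightarrow> real filter" where
  "upper_end b = (if b = \<infinity> then at_top else at_left (real_of_ereal b))"

definition lower_end :: "ereal \<Rightarrow> real filter" where
  "lower_end a = (if a = -\<infinity> then at_bot else at_right (real_of_ereal a))"

definition is_solution :: "real \<Rightarrow> ereal \<Rightarrow> ereal \<Rightarrow> (real \<Rightarrow> real) \<Rightarrow> (real \<Rightarrow> real) \<Rightarrow> bool" where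
  "is_solution xi a b y z \<longleftrightarrow> a < b \<and>
     (\<forall>t\<in>time_int a b.
        (y has_real_derivative (exp (z t) - 1)) (at t) \<and>
        (z has_real_derivative (xi + exp (z t) * (xi * z t - xi * y t - xi))) (at t))"

text \<open>Convergence to Q3 = (w3,y3) = (0,1) in the chart y3 = y/z, w3 = 1/z (z > 0).\<close>
definition tends_to_Q3 :: "'a filter \<Rightarrow> ('a \<Rightarrow> real) \<Rightarrow> ('a \<Rightarrow> real) \<Rightarrow> bool" where
  "tends_to_Q3 F y z \<longleftrightarrow> eventually (\<lambda>t. z t > 0) F \<and>
     ((\<lambda>t. 1 / z t) \<longlongrightarrow> 0) F \<and> ((\<lambda>t. y t / z t) \<longlongrightarrow> 1) F"

text \<open>Convergence to Q6 = (rho,eta) = (0,1) in the chart rho = -1/z, eta = e^{-z}/y (z < 0, y > 0).\<close>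
definition tends_to_Q6 :: "'a filter \<Rightarrow> ('a \<Rightarrow> real) \<Rightarrow> ('a \<Rightarrow> real) \<Rightarrow> bool" where
  "tends_to_Q6 F y z \<longleftrightarrow> eventually (\<lambda>t. z t < 0 \<and> y t > 0) F \<and>
     ((\<lambda>t. - 1 / z t) \<longlongrightarrow> 0) F \<and> ((\<lambda>t. exp (- z t) / y t) \<longlongrightarrow> 1) F"

definition heteroclinic :: "real \<Rightarrow> ereal \<Rightarrow> ereal \<Rightarrow> (real \<Rightarrow> real) \<Rightarrow> (real \<Rightarrow> real) \<Rightarrow> bool" where
  "heteroclinic xi a b y z \<longleftrightarrow> is_solution xi a b y z \<and>
     tends_to_Q6 (lower_end a) y z \<and> tends_to_Q3 (upper_end b) y z"

definition orbit :: "ereal \<Rightarrow> ereal \<Rightarrow> (real \<Rightarrow> real) \<Rightarrow> (real \<Rightarrow> real) \<Rightarrow> (real \<times> real) set" where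
  "orbit a b y z = (\<lambda>t. (y t, z t)) ` time_int a b"

end

theory Submission
  imports Defs "HOL-Real_Asymp.Real_Asymp"
begin

lemma exp_strict: "0 < d \<Longrightarrow> 1 + d < exp (d::real)"
proof -
  assume d: "0 < d"
  have e: "exp d = exp (d/2)^2" by (simp add: power2_eq_square exp_add[symmetric])
  have "1 + d/2 \<le> exp (d/2)" by (rule exp_ge_add_one_self)
  hence "(1 + d/2)^2 \<le> exp (d/2)^2" by (rule power_mono) (use d in auto)
  moreover have "(1 + d/2)^2 = 1 + d + d^2/4" by (simp add: power2_eq_square field_simps)
  moreover have "d^2/4 > 0" using d by simp
  ultimately show ?thesis using e d by linarith
qed

lemma exp_strict2: "0 < d \<Longrightarrow> 1 - d < exp (-d::real)"
proof -
  assume d: "0 < d"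
  show ?thesis
  proof (cases "d < 1")
    case True
    have e: "exp (-d) = exp (-d/2)^2" by (simp add: power2_eq_square exp_add[symmetric])
    have "1 + (-d/2) \<le> exp (-d/2)" by (rule exp_ge_add_one_self)
    hence "(1 - d/2)^2 \<le> exp (-d/2)^2" by (intro power_mono) (use True in auto)
    moreover have "(1 - d/2)^2 = 1 - d + d^2/4" by (simp add: power2_eq_square field_simps)
    moreover have "d^2/4 > 0" using d by simp
    ultimately show ?thesis using e d by linarith
  next
    case False
    then show ?thesis by (smt (verit) exp_gt_zero)
  qed
qed

lemma mono_g: "0 \<le> (x::real) \<Longrightarrow> x < y \<Longrightarrow> x + exp (-x) < y + exp(-y)"
proof -
  assume x: "0 \<le> x" and xy: "x < y"
  define d where "d = y - x"
  have d: "0 < d" using xy d_def by simp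
  have ey: "exp (-y) = exp (-x) * exp (-d)" by (simp add: d_def exp_add[symmetric])
  have "exp (-x) \<le> 1" using x by simp
  moreover have "0 \<le> 1 - exp (-d)" using d by simp
  ultimately have "exp (-x) * (1 - exp (-d)) \<le> 1 - exp (-d)"
    by (intro mult_left_le_one_le) auto
  moreover have "1 - exp (-d) < d" using exp_strict2[OF d] by simp
  ultimately show ?thesis using ey d_def by (simp add: algebra_simps)
qed

lemma mono_g2: "0 \<le> (x::real) \<Longrightarrow> x < y \<Longrightarrow> exp x - x < exp y - y"
proof -
  assume x: "0 \<le> x" and xy: "x < y"
  define d where "d = y - x"
  have d: "0 < d" using xy d_def by simp
  have ey: "exp y = exp x * exp d" by (simp add: d_def exp_add[symmetric])
  have "1 \<le> exp x" using x by simp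
  moreover have "0 \<le> exp d - 1" using d by simp
  ultimately have "1 * (exp d - 1) \<le> exp x * (exp d - 1)"
    by (intro mult_right_mono) auto
  moreover have "d < exp d - 1" using exp_strict[OF d] by simp
  ultimately show ?thesis using ey d_def by (simp add: algebra_simps)
qed

lemma inv_props:
  fixes f :: "real \<Rightarrow> real"
  assumes cont: "continuous_on {0..} f" and mono: "\<And>x y. 0 \<le> x \<Longrightarrow> x < y \<Longrightarrow> f x < f y"
    and lim: "filterlim f at_top at_top"
  shows "\<exists>h. (\<forall>y\<ge>f 0. h y \<ge> 0 \<and> f (h y) = y) \<and> (\<forall>x\<ge>0. h (f x) = x) \<and>
             continuous_on {f 0..} h \<and> filterlim h at_top at_top"
proof -
  have surj: "\<exists>x\<ge>0. f x = y" if y: "y \<ge> f 0" for y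
  proof -
    have "eventually (\<lambda>x. y \<le> f x) at_top" using lim by (simp add: filterlim_at_top)
    then obtain N where N: "\<And>x. x \<ge> N \<Longrightarrow> y \<le> f x" by (auto simp: eventually_at_top_linorder)
    define B where "B = max 0 N"
    have "f B \<ge> y" "B \<ge> 0" using N B_def by auto
    moreover have "continuous_on {0..B} f" using cont by (rule continuous_on_subset) auto
    ultimately obtain x where "x \<ge> 0" "x \<le> B" "f x = y" using IVT'[of f 0 y B] y by auto
    thus ?thesis by auto
  qed
  have inj: "x = x'" if "0 \<le> x" "0 \<le> x'" "f x = f x'" for x x'
    using mono[of x x'] mono[of x' x] that by (cases x x' rule: linorder_cases) auto
  have monole: "f x \<le> f x'" if "0 \<le> x" "x \<le> x'" for x x'
    using mono[of x x'] that by (cases "x = x'") auto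
  define h where "h y = (SOME x. x \<ge> 0 \<and> f x = y)" for y
  have P1: "h y \<ge> 0 \<and> f (h y) = y" if "y \<ge> f 0" for y
    unfolding h_def by (rule someI_ex) (use surj[OF that] in auto)
  have P2: "h (f x) = x" if "x \<ge> 0" for x
    using P1[of "f x"] monole[OF order_refl that] inj[of "h (f x)" x] that by auto
  have hmono: "h y1 \<le> h y2" if "f 0 \<le> y1" "y1 \<le> y2" for y1 y2
  proof (rule ccontr)
    assume "\<not> h y1 \<le> h y2"
    hence "f (h y2) < f (h y1)" using P1[of y2] that by (intro mono) auto
    thus False using P1[of y1] P1[of y2] that by auto
  qed
  have C: "continuous_on {f 0..} h"
    unfolding continuous_on_eq_continuous_within
  proof
    fix y assume y: "y \<in> {f 0..}"
    define B where "B = h (y + 1)"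
    have B: "B \<ge> 0" "f B = y + 1" using P1[of "y+1"] y B_def by auto
    have img: "f ` {0..B} = {f 0..y+1}"
    proof
      show "f ` {0..B} \<subseteq> {f 0..y+1}"
      proof
        fix w assume "w \<in> f ` {0..B}"
        then obtain x where "x \<in> {0..B}" "w = f x" by auto
        then show "w \<in> {f 0..y+1}" using monole[of 0 x] monole[of x B] B by auto
      qed
      show "{f 0..y+1} \<subseteq> f ` {0..B}"
      proof
        fix w assume w: "w \<in> {f 0..y+1}"
        have "h w \<le> B" unfolding B_def using hmono w by auto
        thus "w \<in> f ` {0..B}" using P1[of w] w by (intro image_eqI[of _ _ "h w"]) auto
      qed
    qed
    have "continuous_on (f ` {0..B}) h"
      by (rule continuous_on_inv) (use cont P2 in \<open>auto intro: continuous_on_subset\<close>)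
    hence "continuous (at y within {f 0..y+1}) h" using img y
      by (simp add: continuous_on_eq_continuous_within)
    moreover have "at y within {f 0..y+1} = at y within {f 0..}"
      by (rule at_within_nhd[where S="{..<y+1}"]) auto
    ultimately show "continuous (at y within {f 0..}) h" by simp
  qed
  have L: "filterlim h at_top at_top"
    unfolding filterlim_at_top
  proof
    fix Z
    show "eventually (\<lambda>y. Z \<le> h y) at_top"
      unfolding eventually_at_top_linorder
    proof (intro exI allI impI)
      fix y assume y: "y \<ge> f (max Z 0)"
      have f0: "f 0 \<le> f (max Z 0)" by (rule monole) auto
      show "Z \<le> h y"
      proof (rule ccontr)
        assume "\<not> Z \<le> h y"
        hence "f (h y) < f (max Z 0)" using P1[of y] y f0 by (intro mono) auto
        thus False using P1[of y] y f0 by auto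
      qed
    qed
  qed
  show ?thesis using P1 P2 C L by blast
qed


lemma time_int_open: "open (time_int a b)"
proof -
  have "time_int a b = {t. (\<lambda>_. a) t < ereal t} \<inter> {t. ereal t < (\<lambda>_. b) t}"
    unfolding time_int_def by auto
  also have "open \<dots>"
    by (intro open_Int open_Collect_less continuous_intros)
  finally show ?thesis .
qed

lemma time_int_interval: "is_interval (time_int a b)"
  unfolding is_interval_1 time_int_def
  by (auto, (metis ereal_less_eq(3) le_less_trans less_le_trans)+)

lemma ev_upper: "a < b \<Longrightarrow> eventually (\<lambda>t. t \<in> time_int a b) (upper_end b)"
proof (cases b)
  case (real r)
  assume ab: "a < b"
  show ?thesis
  proof (cases a)
    case (real s)
    with ab \<open>b = ereal r\<close> have "s < r" by simp
    then show ?thesis using real \<open>b = ereal r\<close>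
      by (auto simp: upper_end_def time_int_def elim!: eventually_mono[OF eventually_at_left_real])
  next
    case PInf with ab show ?thesis by simp
  next
    case MInf
    have "eventually (\<lambda>t. t \<in> {r-1<..<r}) (at_left r)" by (rule eventually_at_left_real) simp
    then show ?thesis using MInf \<open>b = ereal r\<close>
      by (auto simp: upper_end_def time_int_def elim!: eventually_mono)
  qed
next
  case PInf
  assume ab: "a < b"
  show ?thesis
  proof (cases a)
    case (real s)
    show ?thesis using real PInf
      by (auto simp: upper_end_def time_int_def intro: eventually_mono[OF eventually_gt_at_top[of s]])
  next
    case PInf with ab \<open>b = \<infinity>\<close> show ?thesis by simp
  next
    case MInf
    show ?thesis using MInf PInf by (simp add: upper_end_def time_int_def)
  qed
next
  case MInf
  assume "a < b" with MInf show ?thesis by simp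
qed

lemma ev_lower: "a < b \<Longrightarrow> eventually (\<lambda>t. t \<in> time_int a b) (lower_end a)"
proof (cases a)
  case (real r)
  assume ab: "a < b"
  show ?thesis
  proof (cases b)
    case (real s)
    with ab \<open>a = ereal r\<close> have "r < s" by simp
    then show ?thesis using real \<open>a = ereal r\<close>
      by (auto simp: lower_end_def time_int_def elim!: eventually_mono[OF eventually_at_right_real])
  next
    case MInf with ab show ?thesis by simp
  next
    case PInf
    have "eventually (\<lambda>t. t \<in> {r<..<r+1}) (at_right r)" by (rule eventually_at_right_real) simp
    then show ?thesis using PInf \<open>a = ereal r\<close>
      by (auto simp: lower_end_def time_int_def elim!: eventually_mono)
  qed
next
  case MInf
  assume ab: "a < b"
  show ?thesis
  proof (cases b)
    case (real s)
    show ?thesis using real MInf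
      by (auto simp: lower_end_def time_int_def intro: eventually_mono[OF eventually_gt_at_bot[of s]])
  next
    case MInf with ab \<open>a = -\<infinity>\<close> show ?thesis by simp
  next
    case PInf
    show ?thesis using MInf PInf by (simp add: lower_end_def time_int_def)
  qed
next
  case PInf
  assume "a < b" with PInf show ?thesis by simp
qed

lemma upper_nontriv: "upper_end b \<noteq> bot"
  by (simp add: upper_end_def)

lemma lower_nontriv: "lower_end a \<noteq> bot"
  by (simp add: lower_end_def)

lemma H_eq1: "xi > 0 \<Longrightarrow> H xi p q = 1 \<longleftrightarrow> p = q + exp (-q) - 1 - 1/xi"
proof -
  assume xi: "xi > 0"
  have "H xi p q = 1 \<longleftrightarrow> xi * p - xi * q + xi + 1 - xi * exp (- q) = 0"
    by (simp add: H_def)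
  also have "\<dots> \<longleftrightarrow> p = q + exp (-q) - 1 - 1/xi"
    using xi by (auto simp: field_simps)
  finally show ?thesis .
qed

lemma H_deriv:
  assumes "(y has_real_derivative (exp (z t) - 1)) (at t)"
    and "(z has_real_derivative (xi + exp (z t) * (xi * z t - xi * y t - xi))) (at t)"
  shows "((\<lambda>t. H xi (y t) (z t)) has_real_derivative 0) (at t)"
  unfolding H_def
  apply (rule derivative_eq_intros assms refl | simp)+
  apply (simp add: field_simps exp_minus)
  done



lemma Q3_zinf: "tends_to_Q3 F y z \<Longrightarrow> filterlim z at_top F"
proof -
  assume Q: "tends_to_Q3 F y z"
  have "filterlim (\<lambda>t. inverse (1 / z t)) at_top F"
    using Q unfolding tends_to_Q3_def
    by (intro filterlim_inverse_at_top) (auto elim!: eventually_mono)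
  thus ?thesis by simp
qed

lemma Q6_zinf: "tends_to_Q6 F y z \<Longrightarrow> filterlim (\<lambda>t. - z t) at_top F"
proof -
  assume Q: "tends_to_Q6 F y z"
  have "filterlim (\<lambda>t. inverse (- 1 / z t)) at_top F"
    using Q unfolding tends_to_Q6_def
    by (intro filterlim_inverse_at_top) (auto elim!: eventually_mono intro: divide_neg_neg)
  thus ?thesis by simp
qed

lemma H_lim_Q3:
  assumes xi: "xi > 0" and Q: "tends_to_Q3 F y z"
  shows "((\<lambda>t. H xi (y t) (z t)) \<longlongrightarrow> 1) F"
proof -
  have zinf: "filterlim z at_top F" using Q by (rule Q3_zinf)
  have zpos: "eventually (\<lambda>t. z t > 0) F" and yz: "((\<lambda>t. y t / z t) \<longlongrightarrow> 1) F"
    using Q unfolding tends_to_Q3_def by auto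
  have "filterlim (\<lambda>t. y t / z t * z t) at_top F"
    by (rule filterlim_tendsto_pos_mult_at_top[OF yz _ zinf]) simp
  moreover have ev1: "eventually (\<lambda>t. y t / z t * z t = y t) F"
    using zpos by (auto elim!: eventually_mono)
  ultimately have yinf: "filterlim y at_top F"
    using filterlim_cong[OF refl refl ev1] by simp
  have ypos: "eventually (\<lambda>t. y t > 0) F" using yinf by (simp add: filterlim_at_top_dense)
  have l1: "((\<lambda>x. exp (- xi * x) * x) \<longlongrightarrow> 0) at_top" using xi by real_asymp
  have l0: "((\<lambda>x. exp (- xi * x)) \<longlongrightarrow> 0) at_top" using xi by real_asymp
  have lz: "((\<lambda>x::real. exp (- x)) \<longlongrightarrow> 0) at_top" by real_asymp
  have E1: "((\<lambda>t. exp (- xi * y t) * y t) \<longlongrightarrow> 0) F"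
    using filterlim_compose[OF l1 yinf] .
  have E0: "((\<lambda>t. exp (- xi * y t)) \<longlongrightarrow> 0) F"
    using filterlim_compose[OF l0 yinf] .
  have Ez: "((\<lambda>t. exp (- z t)) \<longlongrightarrow> 0) F"
    using filterlim_compose[OF lz zinf] .
  have "((\<lambda>t. inverse (y t / z t)) \<longlongrightarrow> inverse 1) F"
    by (rule tendsto_inverse[OF yz]) simp
  hence zy: "((\<lambda>t. z t / y t) \<longlongrightarrow> 1) F" by simp
  have "((\<lambda>t. exp (- xi * y t) * y t * (z t / y t)) \<longlongrightarrow> 0) F"
    using tendsto_mult[OF E1 zy] by simp
  moreover have ev2: "eventually (\<lambda>t. exp (- xi * y t) * y t * (z t / y t) = exp (- xi * y t) * z t) F"
    using ypos by (auto elim!: eventually_mono)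
  ultimately have E2: "((\<lambda>t. exp (- xi * y t) * z t) \<longlongrightarrow> 0) F"
    using tendsto_cong[OF ev2] by simp
  have "((\<lambda>t. 1 - (xi * (exp (- xi * y t) * y t) - xi * (exp (- xi * y t) * z t)
        + (xi + 1) * exp (- xi * y t) - xi * (exp (- xi * y t) * exp (- z t))))
        \<longlongrightarrow> 1 - (xi * 0 - xi * 0 + (xi + 1) * 0 - xi * (0 * 0))) F"
    by (intro tendsto_intros E1 E2 E0 Ez)
  moreover have "\<And>t. H xi (y t) (z t) = 1 - (xi * (exp (- xi * y t) * y t) - xi * (exp (- xi * y t) * z t)
        + (xi + 1) * exp (- xi * y t) - xi * (exp (- xi * y t) * exp (- z t)))"
    by (simp add: H_def algebra_simps)
  ultimately show ?thesis by simp
qed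


lemma part_exist:
  assumes xi: "xi > 0"
  shows "\<exists>a b y z. heteroclinic xi a b y z"
proof -
  define z where "z t = - ln (- t)" for t :: real
  define y where "y t = - ln (- t) - t - 1 - 1/xi" for t :: real
  have ti: "time_int (-\<infinity>) 0 = {t. t < 0}" by (auto simp: time_int_def)
  have sol: "is_solution xi (-\<infinity>) 0 y z"
    unfolding is_solution_def ti
  proof (intro conjI ballI)
    show "- \<infinity> < (0::ereal)" by simp
    fix t :: real assume "t \<in> {t. t < 0}"
    hence t: "t < 0" by simp
    have ez: "exp (z t) = - 1 / t" using t by (simp add: z_def exp_minus inverse_eq_divide)
    show "(y has_real_derivative (exp (z t) - 1)) (at t)"
      unfolding ez y_def using t
      by (auto intro!: derivative_eq_intros simp: field_simps)
    show "(z has_real_derivative (xi + exp (z t) * (xi * z t - xi * y t - xi))) (at t)"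
      unfolding ez unfolding z_def y_def using t xi
      by (auto intro!: derivative_eq_intros simp: field_simps)
  qed
  have Q6: "tends_to_Q6 at_bot y z"
    unfolding tends_to_Q6_def y_def z_def
  proof (intro conjI)
    have "eventually (\<lambda>t::real. - ln (-t) < 0) at_bot" by real_asymp
    moreover have "eventually (\<lambda>t::real. (- ln (-t) - t - 1 - 1/xi) > 0) at_bot" by real_asymp
    ultimately show "eventually (\<lambda>t::real. - ln (-t) < 0 \<and> (- ln (-t) - t - 1 - 1/xi) > 0) at_bot"
      by (rule eventually_conj)
    show "((\<lambda>t::real. - 1 / (- ln (-t))) \<longlongrightarrow> 0) at_bot" by real_asymp
    show "((\<lambda>t::real. exp (- (- ln (-t))) / (- ln (-t) - t - 1 - 1/xi)) \<longlongrightarrow> 1) at_bot" by real_asymp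
  qed
  have Q3: "tends_to_Q3 (at_left 0) y z"
    unfolding tends_to_Q3_def y_def z_def
  proof (intro conjI)
    show "eventually (\<lambda>t::real. - ln (-t) > 0) (at_left 0)" by real_asymp
    show "((\<lambda>t::real. 1 / (- ln (-t))) \<longlongrightarrow> 0) (at_left 0)" by real_asymp
    show "((\<lambda>t::real. (- ln (-t) - t - 1 - 1/xi) / (- ln (-t))) \<longlongrightarrow> 1) (at_left 0)" by real_asymp
  qed
  have "heteroclinic xi (-\<infinity>) 0 y z"
    unfolding heteroclinic_def using sol Q6 Q3 by (simp add: lower_end_def upper_end_def)
  thus ?thesis by blast
qed

lemma part_unique:
  assumes xi: "xi > 0" and het: "heteroclinic xi a b y z"
  shows "orbit a b y z = {(p, q). H xi p q = 1}"
proof -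
  define S where "S = time_int a b"
  have sol: "is_solution xi a b y z" and Q6: "tends_to_Q6 (lower_end a) y z"
    and Q3: "tends_to_Q3 (upper_end b) y z" using het by (auto simp: heteroclinic_def)
  have ab: "a < b" using sol by (simp add: is_solution_def)
  have dy: "\<And>t. t \<in> S \<Longrightarrow> (y has_real_derivative (exp (z t) - 1)) (at t)"
   and dz: "\<And>t. t \<in> S \<Longrightarrow> (z has_real_derivative (xi + exp (z t) * (xi * z t - xi * y t - xi))) (at t)"
    using sol by (auto simp: is_solution_def S_def)
  have dH: "\<And>t. t \<in> S \<Longrightarrow> ((\<lambda>t. H xi (y t) (z t)) has_real_derivative 0) (at t)"
    using dy dz H_deriv by blast
  have conn: "connected S" using time_int_interval[of a b] is_interval_connected_1
    unfolding S_def by blast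
  have opn: "open S" unfolding S_def by (rule time_int_open)
  have contH: "continuous_on S (\<lambda>t. H xi (y t) (z t))"
    using dH by (intro continuous_at_imp_continuous_on ballI DERIV_isCont) blast
  obtain c where c: "\<And>t. t \<in> S \<Longrightarrow> H xi (y t) (z t) = c"
    using DERIV_zero_connected_constant[OF conn opn finite.emptyI contH] dH by blast
  have evU: "eventually (\<lambda>t. t \<in> S) (upper_end b)" unfolding S_def by (rule ev_upper[OF ab])
  have evL: "eventually (\<lambda>t. t \<in> S) (lower_end a)" unfolding S_def by (rule ev_lower[OF ab])
  have lim1: "((\<lambda>t. H xi (y t) (z t)) \<longlongrightarrow> 1) (upper_end b)" by (rule H_lim_Q3[OF xi Q3])
  have evc: "eventually (\<lambda>t. H xi (y t) (z t) = c) (upper_end b)"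
    using evU by (auto elim!: eventually_mono intro: c)
  have "((\<lambda>t. c) \<longlongrightarrow> 1) (upper_end b)"
    using tendsto_cong[OF evc] lim1 by simp
  hence c1: "c = 1" using upper_nontriv[of b] tendsto_const_iff by metis
  have Hon: "\<And>t. t \<in> S \<Longrightarrow> H xi (y t) (z t) = 1" using c c1 by simp
  show ?thesis
  proof
    show "orbit a b y z \<subseteq> {(p, q). H xi p q = 1}"
      unfolding orbit_def S_def[symmetric] using Hon by auto
    show "{(p, q). H xi p q = 1} \<subseteq> orbit a b y z"
    proof
      fix pq assume "pq \<in> {(p, q). H xi p q = 1}"
      then obtain p q where pq: "pq = (p, q)" and Hpq: "H xi p q = 1" by auto
      have zinf: "filterlim z at_top (upper_end b)" using Q3 by (rule Q3_zinf)
      have "eventually (\<lambda>t. q + 1 \<le> z t) (upper_end b)" using zinf by (simp add: filterlim_at_top)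
      with evU have "eventually (\<lambda>t. t \<in> S \<and> q + 1 \<le> z t) (upper_end b)" by (rule eventually_conj)
      then obtain t2 where t2: "t2 \<in> S" "q \<le> z t2"
        using eventually_happens'[OF upper_nontriv] by fastforce
      have zinf2: "filterlim (\<lambda>t. - z t) at_top (lower_end a)" using Q6 by (rule Q6_zinf)
      have "eventually (\<lambda>t. - q + 1 \<le> - z t) (lower_end a)" using zinf2 by (simp add: filterlim_at_top)
      with evL have "eventually (\<lambda>t. t \<in> S \<and> - q + 1 \<le> - z t) (lower_end a)" by (rule eventually_conj)
      then obtain t1 where t1: "t1 \<in> S" "z t1 \<le> q"
        using eventually_happens'[OF lower_nontriv] by fastforce
      have contz: "continuous_on S z"
        using dz by (intro continuous_at_imp_continuous_on ballI DERIV_isCont) blast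
      have "connected (z ` S)" by (rule connected_continuous_image[OF contz conn])
      hence "is_interval (z ` S)" using is_interval_connected_1 by blast
      hence "q \<in> z ` S" using t1 t2 unfolding is_interval_1 by blast
      then obtain t where t: "t \<in> S" "z t = q" by auto
      have "y t = z t + exp (- z t) - 1 - 1/xi" using Hon[OF t(1)] H_eq1[OF xi] by blast
      moreover have "p = q + exp (- q) - 1 - 1/xi" using Hpq H_eq1[OF xi] by blast
      ultimately have "y t = p" using t by simp
      thus "pq \<in> orbit a b y z" unfolding orbit_def S_def[symmetric] using t pq by auto
    qed
  qed
qed


lemma part_graph:
  assumes xi: "xi > 0"
  shows "\<exists>zm zp :: real \<Rightarrow> real.
            {(p, q). H xi p q = 1} = {(p, zm p) | p. p \<ge> - 1 / xi} \<union> {(p, zp p) | p. p \<ge> - 1 / xi} \<and>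
            continuous_on {- 1 / xi..} zm \<and> continuous_on {- 1 / xi..} zp \<and>
            tends_to_Q3 at_top (\<lambda>p. p) zm \<and> zm \<in> O(\<lambda>p. p) \<and>
            tends_to_Q6 at_top (\<lambda>p. p) zp \<and> zp \<in> O(\<lambda>p. ln p)"
proof -
  define g where "g z = z + exp (- z) - 1 - 1/xi" for z :: real
  define g2 where "g2 w = exp w - w - 1 - 1/xi" for w :: real
  have g0: "g 0 = - 1 / xi" and g20: "g2 0 = - 1 / xi" by (simp_all add: g_def g2_def)
  have gm: "\<And>x y. 0 \<le> x \<Longrightarrow> x < y \<Longrightarrow> g x < g y" unfolding g_def using mono_g by fastforce
  have g2m: "\<And>x y. 0 \<le> x \<Longrightarrow> x < y \<Longrightarrow> g2 x < g2 y" unfolding g2_def using mono_g2 by fastforce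
  have gc: "continuous_on {0..} g" unfolding g_def by (intro continuous_intros)
  have g2c: "continuous_on {0..} g2" unfolding g2_def by (intro continuous_intros)
  have gl: "filterlim g at_top at_top" unfolding g_def by real_asymp
  have g2l: "filterlim g2 at_top at_top" unfolding g2_def by real_asymp
  obtain h1 where h1: "\<forall>y\<ge>g 0. h1 y \<ge> 0 \<and> g (h1 y) = y" "\<forall>x\<ge>0. h1 (g x) = x"
    "continuous_on {g 0..} h1" "filterlim h1 at_top at_top"
    using inv_props[OF gc gm gl] by blast
  obtain h2 where h2: "\<forall>y\<ge>g2 0. h2 y \<ge> 0 \<and> g2 (h2 y) = y" "\<forall>x\<ge>0. h2 (g2 x) = x"
    "continuous_on {g2 0..} h2" "filterlim h2 at_top at_top"
    using inv_props[OF g2c g2m g2l] by blast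
  define zm where "zm = h1"
  define zp where "zp p = - h2 p" for p
  have gge: "g x \<ge> - 1 / xi" if "x \<ge> 0" for x
    using gm[of 0 x] that g0 by (cases "x = 0") auto
  have g2ge: "g2 x \<ge> - 1 / xi" if "x \<ge> 0" for x
    using g2m[of 0 x] that g20 by (cases "x = 0") auto
  have g2g: "g2 w = g (- w)" for w by (simp add: g_def g2_def)
  have Heq: "H xi p q = 1 \<longleftrightarrow> p = g q" for p q using H_eq1[OF xi] by (simp add: g_def)
  have seteq: "{(p, q). H xi p q = 1} = {(p, zm p) | p. p \<ge> - 1 / xi} \<union> {(p, zp p) | p. p \<ge> - 1 / xi}"
  proof (intro equalityI subsetI)
    fix pq assume "pq \<in> {(p, q). H xi p q = 1}"
    then obtain p q where pq: "pq = (p, q)" "p = g q" using Heq by auto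
    show "pq \<in> {(p, zm p) | p. p \<ge> - 1 / xi} \<union> {(p, zp p) | p. p \<ge> - 1 / xi}"
    proof (cases "q \<ge> 0")
      case True
      then have "zm p = q" "p \<ge> - 1 / xi" using h1(2) pq gge unfolding zm_def by auto
      then show ?thesis using pq by auto
    next
      case False
      then have "p = g2 (-q)" using pq g2g by simp
      then have "zp p = q" "p \<ge> - 1 / xi" using h2(2) False g2ge unfolding zp_def by auto
      then show ?thesis using pq by auto
    qed
  next
    fix pq assume "pq \<in> {(p, zm p) | p. p \<ge> - 1 / xi} \<union> {(p, zp p) | p. p \<ge> - 1 / xi}"
    then obtain p where p: "p \<ge> - 1 / xi" "pq = (p, zm p) \<or> pq = (p, zp p)" by auto
    have "g (zm p) = p" using h1(1) p g0 unfolding zm_def by auto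
    moreover have "g (zp p) = p" using h2(1) p g20 g2g unfolding zp_def by auto
    ultimately show "pq \<in> {(p, q). H xi p q = 1}" using p Heq by auto
  qed
  have c1: "continuous_on {- 1 / xi..} zm" using h1(3) g0 unfolding zm_def by simp
  have c2: "continuous_on {- 1 / xi..} zp" using h2(3) g20 unfolding zp_def[abs_def]
    by (intro continuous_intros) simp
  have ev_g: "eventually (\<lambda>p. g (h1 p) = p \<and> h1 p > 0) at_top"
    using eventually_gt_at_top[of "- 1 / xi"]
  proof (rule eventually_mono)
    fix p assume p: "p > - 1 / xi"
    have "g (h1 p) = p" "h1 p \<ge> 0" using h1(1) p g0 by auto
    moreover have "h1 p \<noteq> 0" using \<open>g (h1 p) = p\<close> p g0 by auto
    ultimately show "g (h1 p) = p \<and> h1 p > 0" by auto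
  qed
  have ev_g2: "eventually (\<lambda>p. g2 (h2 p) = p \<and> h2 p > 0 \<and> p > 1) at_top"
    using eventually_gt_at_top[of "1"]
  proof (rule eventually_mono)
    fix p :: real assume p: "p > 1"
    have "- 1 / xi < 0" using xi by simp
    hence pp: "p \<ge> g2 0" using p g20 by linarith
    have "g2 (h2 p) = p" "h2 p \<ge> 0" using h2(1) pp by auto
    moreover have "h2 p \<noteq> 0"
    proof
      assume "h2 p = 0"
      then have "p = g2 0" using \<open>g2 (h2 p) = p\<close> by simp
      then show False using p g20 \<open>- 1 / xi < 0\<close> by linarith
    qed
    ultimately show "g2 (h2 p) = p \<and> h2 p > 0 \<and> p > 1" using p by auto
  qed
  have Q3: "tends_to_Q3 at_top (\<lambda>p. p) zm"
    unfolding tends_to_Q3_def zm_def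
  proof (intro conjI)
    show "eventually (\<lambda>p. h1 p > 0) at_top" using ev_g by (auto elim!: eventually_mono)
    have "((\<lambda>p. inverse (h1 p)) \<longlongrightarrow> 0) at_top" by (rule tendsto_inverse_0_at_top[OF h1(4)])
    thus "((\<lambda>p. 1 / h1 p) \<longlongrightarrow> 0) at_top" by (simp add: inverse_eq_divide)
    have l: "((\<lambda>z. g z / z) \<longlongrightarrow> 1) at_top" unfolding g_def by real_asymp
    have "((\<lambda>p. g (h1 p) / h1 p) \<longlongrightarrow> 1) at_top" using filterlim_compose[OF l h1(4)] .
    moreover have ev: "eventually (\<lambda>p. g (h1 p) / h1 p = p / h1 p) at_top"
      using ev_g by (auto elim!: eventually_mono)
    ultimately show "((\<lambda>p. p / h1 p) \<longlongrightarrow> 1) at_top" using tendsto_cong[OF ev] by simp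
  qed
  have O1: "zm \<in> O(\<lambda>p. p)"
  proof -
    have l: "((\<lambda>z. z / g z) \<longlongrightarrow> 1) at_top" unfolding g_def by real_asymp
    have "((\<lambda>p. h1 p / g (h1 p)) \<longlongrightarrow> 1) at_top" using filterlim_compose[OF l h1(4)] .
    moreover have ev: "eventually (\<lambda>p. h1 p / g (h1 p) = h1 p / p) at_top"
      using ev_g by (auto elim!: eventually_mono)
    ultimately have "((\<lambda>p. zm p / p) \<longlongrightarrow> 1) at_top" using tendsto_cong[OF ev] by (simp add: zm_def)
    moreover have "eventually (\<lambda>p::real. p \<noteq> 0) at_top" by (rule eventually_at_top_not_equal)
    ultimately show ?thesis by (rule bigoI_tendsto)
  qed
  have Q6: "tends_to_Q6 at_top (\<lambda>p. p) zp"
    unfolding tends_to_Q6_def zp_def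
  proof (intro conjI)
    show "eventually (\<lambda>p. - h2 p < 0 \<and> p > 0) at_top" using ev_g2 by (auto elim!: eventually_mono)
    have "((\<lambda>p. inverse (h2 p)) \<longlongrightarrow> 0) at_top" by (rule tendsto_inverse_0_at_top[OF h2(4)])
    thus "((\<lambda>p. - 1 / - h2 p) \<longlongrightarrow> 0) at_top" by (simp add: inverse_eq_divide)
    have l: "((\<lambda>z. exp z / g2 z) \<longlongrightarrow> 1) at_top" unfolding g2_def by real_asymp
    have "((\<lambda>p. exp (h2 p) / g2 (h2 p)) \<longlongrightarrow> 1) at_top" using filterlim_compose[OF l h2(4)] .
    moreover have ev: "eventually (\<lambda>p. exp (h2 p) / g2 (h2 p) = exp (- (- h2 p)) / p) at_top"
      using ev_g2 by (auto elim!: eventually_mono)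
    ultimately show "((\<lambda>p. exp (- (- h2 p)) / p) \<longlongrightarrow> 1) at_top" using tendsto_cong[OF ev] by simp
  qed
  have O2: "zp \<in> O(\<lambda>p. ln p)"
  proof -
    have l: "((\<lambda>z. z / ln (g2 z)) \<longlongrightarrow> 1) at_top" unfolding g2_def by real_asymp
    have "((\<lambda>p. h2 p / ln (g2 (h2 p))) \<longlongrightarrow> 1) at_top" using filterlim_compose[OF l h2(4)] .
    hence "((\<lambda>p. - (h2 p / ln (g2 (h2 p)))) \<longlongrightarrow> - 1) at_top" by (rule tendsto_minus)
    moreover have ev: "eventually (\<lambda>p. - (h2 p / ln (g2 (h2 p))) = zp p / ln p) at_top"
      using ev_g2 by (auto elim!: eventually_mono simp: zp_def)
    ultimately have "((\<lambda>p. zp p / ln p) \<longlongrightarrow> - 1) at_top" using tendsto_cong[OF ev] by simp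
    moreover have "eventually (\<lambda>p::real. ln p \<noteq> 0) at_top"
      using ev_g2 by (auto elim!: eventually_mono)
    ultimately show ?thesis by (rule bigoI_tendsto)
  qed
  show ?thesis using seteq c1 c2 Q3 O1 Q6 O2 by blast
qed

theorem lemma3:
  fixes xi :: real
  assumes "xi > 0"
  shows "(\<exists>a b y z. heteroclinic xi a b y z) \<and>
         (\<forall>a b y z. heteroclinic xi a b y z \<longrightarrow> orbit a b y z = {(p, q). H xi p q = 1}) \<and>
         (\<exists>zm zp :: real \<Rightarrow> real.
            {(p, q). H xi p q = 1} = {(p, zm p) | p. p \<ge> - 1 / xi} \<union> {(p, zp p) | p. p \<ge> - 1 / xi} \<and>
            continuous_on {- 1 / xi..} zm \<and> continuous_on {- 1 / xi..} zp \<and>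
            tends_to_Q3 at_top (\<lambda>p. p) zm \<and> zm \<in> O(\<lambda>p. p) \<and>
            tends_to_Q6 at_top (\<lambda>p. p) zp \<and> zp \<in> O(\<lambda>p. ln p))"
  using part_exist[OF assms] part_unique[OF assms] part_graph[OF assms] by blast

end
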